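(* Let $q\ge 2$, $n\ge 1$, $h\in F(n,q)$ and $G=\mathrm{IG}^*(h)$. Let $s\ge 1$, $c:[n]\to[s]$ and $u\in\Pi([n])$ be such that for every $i\in[n]$ at least one of the following holds: (1) for every neighbour $k$ of $i$ in $G$, $u(i)\le u(k)$; (2) for all $j,k\in[n]$ such that $c(j)=c(i)$, $u(i)<u(j)$ and $k$ is a neighbour of $j$ in $G$, we have $u(i)\le u(k)$. Then $\kappa(h,u)\le s$.
   Context: Let $q\ge 2$, $A=\{0,1,\dots,q-1\}$, $[n]=\{1,\dots,n\}$, and let $F(n,q)$ be the set of all maps $A^n\to A^n$. For $f\in F(m,q)$ and $i\in[m]$, $f_i$ is the $i$-th coordinate function and $f^i(x)=(x_1,\dots,x_{i-1},f_i(x),x_{i+1},\dots,x_m)$; for a word $w=(w_1,\dots,w_t)$ over $[m]$, $f^w=f^{w_t}\circ\cdots\circ f^{w_1}$. $\Pi([m])$ is the set of permutations of $[m]$ written as words $(w_1,\dots,w_m)$; $w(i)$ is the position of $i$ in $w$. $\mathrm{pr}_{[n]}:A^m\to A^n$ is the projection onto the first $n$ coordinates. For $m\ge n$, $(f,w)$ with $f\in F(m,q)$, $w\in\Pi([m])$ sequentializes $h\in F(n,q)$ if $\mathrm{pr}_{[n]}\circ f^w=h\circ\mathrm{pr}_{[n]}$. For $u\in\Pi([n])$, $w\in\Pi([m])$ respects $u$ if for all $i,j\in[n]$, $u(i)<u(j)$ implies $w(i)<w(j)$. $\kappa(h,u)$ is the smallest $k\ge0$ such that some $f\in F(n+k,q)$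 and $w\in\Pi([n+k])$ respecting $u$ sequentialize $h$. The interaction graph $\mathrm{IG}(h)$ is the directed graph on $[n]$ with an arc $(i,j)$ iff there exist $x,y\in A^n$ with $x_\ell=y_\ell$ for all $\ell\ne i$ and $h_j(x)\ne h_j(y)$; $\mathrm{IG}^*(h)$ is its undirected version ($\{i,j\}$ is an edge, possibly a loop, iff $(i,j)$ or $(j,i)$ is an arc). *)

theory Defs
  imports Main
begin

text \<open>Coordinates are 0-based: [n] is rendered as {0..<n}. A configuration in A^n is a
list of length n with entries < q; the i-th coordinate is xs ! i.\<close>

definition cube :: "nat \<Rightarrow> nat \<Rightarrow> nat list set" where
  "cube q n = {xs. length xs = n \<and> (\<forall>a\<in>set xs. a < q)}"

definition inF :: "nat \<Rightarrow> nat \<Rightarrow> (nat list \<Rightarrow> nat list) \<Rightarrow> bool" where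
  "inF n q f = (\<forall>x\<in>cube q n. f x \<in> cube q n)"

definition upd :: "(nat list \<Rightarrow> nat list) \<Rightarrow> nat \<Rightarrow> nat list \<Rightarrow> nat list" where
  "upd f i x = x[i := f x ! i]"

text \<open>f^w = f^{w_t} o ... o f^{w_1}  (w_1 applied first).\<close>
definition fseq :: "(nat list \<Rightarrow> nat list) \<Rightarrow> nat list \<Rightarrow> nat list \<Rightarrow> nat list" where
  "fseq f w x = fold (\<lambda>i y. upd f i y) w x"

definition isPerm :: "nat \<Rightarrow> nat list \<Rightarrow> bool" where
  "isPerm m w = (distinct w \<and> set w = {0..<m})"

definition sequentializes ::
  "nat \<Rightarrow> nat \<Rightarrow> nat \<Rightarrow> (nat list \<Rightarrow> nat list) \<Rightarrow> nat list \<Rightarrow> (nat list \<Rightarrow> nat list) \<Rightarrow> bool" where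
  "sequentializes q n m f w h = (\<forall>x\<in>cube q m. take n (fseq f w x) = h (take n x))"

definition pos :: "nat list \<Rightarrow> nat \<Rightarrow> nat" where
  "pos w i = (LEAST p. p < length w \<and> w ! p = i)"

definition respects_order :: "nat \<Rightarrow> nat list \<Rightarrow> nat list \<Rightarrow> bool" where
  "respects_order n u w = (\<forall>i<n. \<forall>j<n. pos u i < pos u j \<longrightarrow> pos w i < pos w j)"

definition kappa :: "nat \<Rightarrow> nat \<Rightarrow> (nat list \<Rightarrow> nat list) \<Rightarrow> nat list \<Rightarrow> nat" where
  "kappa q n h u = (LEAST k. \<exists>f w. inF (n + k) q f \<and> isPerm (n + k) w \<and> respects_order n u w
                                 \<and> sequentializes q n (n + k) f w h)"

definition IG_arc :: "nat \<Rightarrow> nat \<Rightarrow> (nat list \<Rightarrow> nat list) \<Rightarrow> nat \<Rightarrow> nat \<Rightarrow> bool" where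
  "IG_arc q n h i j = (i < n \<and> j < n \<and> (\<exists>x\<in>cube q n. \<exists>y\<in>cube q n.
      (\<forall>l<n. l \<noteq> i \<longrightarrow> x ! l = y ! l) \<and> h x ! j \<noteq> h y ! j))"

definition IG_edge :: "nat \<Rightarrow> nat \<Rightarrow> (nat list \<Rightarrow> nat list) \<Rightarrow> nat \<Rightarrow> nat \<Rightarrow> bool" where
  "IG_edge q n h i j = (IG_arc q n h i j \<or> IG_arc q n h j i)"

end

theory Submission imports Defs begin

lemma pos_nth:
  assumes "distinct w" "p < length w" shows "pos w (w ! p) = p"
  unfolding pos_def
  apply (rule Least_equality)
  using assms by (auto simp: nth_eq_iff_index_eq)

lemma pos_in:
  assumes "v \<in> set w" shows "pos w v < length w \<and> w ! pos w v = v"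
proof -
  obtain p where p: "p < length w" "w ! p = v" using assms by (auto simp: in_set_conv_nth)
  have "pos w v < length w \<and> w ! pos w v = v" unfolding pos_def
    by (rule LeastI[of "\<lambda>p. p < length w \<and> w ! p = v" p]) (use p in auto)
  then show ?thesis .
qed

lemma fold_steps:
  assumes "S 0 = x" and "\<And>t. t < length w \<Longrightarrow> upd f (w!t) (S t) = S (Suc t)"
  shows "t \<le> length w \<Longrightarrow> fold (\<lambda>i y. upd f i y) (take t w) x = S t"
proof (induction t)
  case 0 then show ?case using assms by simp
next
  case (Suc t)
  have "take (Suc t) w = take t w @ [w!t]" using Suc.prems by (simp add: take_Suc_conv_app_nth)
  then show ?case using Suc assms(2)[of t] by simp
qed

lemma locality:
  assumes X: "X \<in> cube q n" and Y: "Y \<in> cube q n" and i: "i < n"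
    and ag: "\<forall>k<n. IG_arc q n h k i \<longrightarrow> X ! k = Y ! k"
  shows "h X ! i = h Y ! i"
proof -
  define Z where "Z t = map (\<lambda>k. if k < t then Y ! k else X ! k) [0..<n]" for t
  have lX: "length X = n" and lY: "length Y = n" using X Y by (auto simp: cube_def)
  have Zc: "Z t \<in> cube q n" for t using X Y unfolding Z_def cube_def
    by (auto simp: in_set_conv_nth intro!: nth_mem)
  have "h (Z t) ! i = h X ! i" if "t \<le> n" for t
    using that
  proof (induction t)
    case 0
    have "Z 0 = X" unfolding Z_def using lX by (simp add: list_eq_iff_nth_eq)
    then show ?case by simp
  next
    case (Suc t)
    show ?case
    proof (cases "X ! t = Y ! t")
      case True
      have "Z (Suc t) = Z t" unfolding Z_def using True by (auto simp: less_Suc_eq)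
      then show ?thesis using Suc by simp
    next
      case False
      then have "\<not> IG_arc q n h t i" using ag Suc.prems by auto
      then have "\<forall>x\<in>cube q n. \<forall>y\<in>cube q n. (\<forall>l<n. l \<noteq> t \<longrightarrow> x ! l = y ! l) \<longrightarrow> h x ! i = h y ! i"
        unfolding IG_arc_def using i Suc.prems by auto
      moreover have "\<forall>l<n. l \<noteq> t \<longrightarrow> Z (Suc t) ! l = Z t ! l" unfolding Z_def by auto
      ultimately have "h (Z (Suc t)) ! i = h (Z t) ! i" using Zc by blast
      then show ?thesis using Suc by simp
    qed
  qed
  moreover have "Z n = Y" unfolding Z_def using lY by (simp add: list_eq_iff_nth_eq)
  ultimately show ?thesis by (metis order_refl)
qed

lemma mod_cancel_int: "((a::int) + A) mod q = (b + A) mod q \<Longrightarrow> a mod q = b mod q"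
proof -
  assume h: "(a + A) mod q = (b + A) mod q"
  have "a mod q = ((a + A) - A) mod q" by simp
  also have "\<dots> = ((a + A) mod q - A) mod q" by (simp add: mod_diff_left_eq)
  also have "\<dots> = ((b + A) mod q - A) mod q" using h by simp
  also have "\<dots> = b mod q" by (simp add: mod_diff_left_eq)
  finally show ?thesis .
qed
lemma mod_cancel_nat: "((a::nat) + A) mod q = (b + A) mod q \<Longrightarrow> a < q \<Longrightarrow> b < q \<Longrightarrow> a = b"
proof -
  assume h: "(a + A) mod q = (b + A) mod q" "a < q" "b < q"
  have "int ((a + A) mod q) = int ((b + A) mod q)" using h by simp
  then have "(int a + int A) mod int q = (int b + int A) mod int q" by (simp add: zmod_int)
  then have "int a mod int q = int b mod int q" by (rule mod_cancel_int)
  then show ?thesis using h by simp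
qed


definition Rg :: "nat \<Rightarrow> (nat list \<Rightarrow> nat list) \<Rightarrow> (nat \<Rightarrow> nat) \<Rightarrow> nat \<Rightarrow> nat \<Rightarrow> nat list \<Rightarrow> nat" where
  "Rg q h c n a X = (\<Sum>j\<in>{j. j < n \<and> c j = a}. h X ! j) mod q"

definition St :: "nat \<Rightarrow> nat \<Rightarrow> nat \<Rightarrow> (nat list \<Rightarrow> nat list) \<Rightarrow> (nat \<Rightarrow> nat) \<Rightarrow> nat list \<Rightarrow> nat \<Rightarrow> nat list \<Rightarrow> nat list" where
  "St q n s h c u t x0 = map (\<lambda>v. if v < n then (if s + pos u v < t then h (take n x0) ! v else x0 ! v)
      else (if v - n < t then Rg q h c n (v - n) (take n x0) else x0 ! v)) [0..<n+s]"

definition Ff :: "nat \<Rightarrow> nat \<Rightarrow> nat \<Rightarrow> (nat list \<Rightarrow> nat list) \<Rightarrow> (nat \<Rightarrow> nat) \<Rightarrow> nat list \<Rightarrow> nat list \<Rightarrow> nat list" where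
  "Ff q n s h c u z = map (\<lambda>v. (if v < n then h (take n (SOME y. y \<in> cube q (n+s) \<and> St q n s h c u (s + pos u v) y = z)) ! v
      else Rg q h c n (v - n) (take n z)) mod q) [0..<n+s]"

lemma take_cube: "x0 \<in> cube q (n+s) \<Longrightarrow> take n x0 \<in> cube q n"
  unfolding cube_def by (auto dest: in_set_takeD)

lemma determ:
  assumes hF: "inF n q h" and u: "isPerm n u"
    and H: "\<forall>i<n.
           (\<forall>k<n. IG_edge q n h i k \<longrightarrow> pos u i \<le> pos u k)
         \<or> (\<forall>j<n. \<forall>k<n. c j = c i \<and> pos u i < pos u j \<and> IG_edge q n h j k
                 \<longrightarrow> pos u i \<le> pos u k)"
    and x0: "x0 \<in> cube q (n+s)" and y0: "y0 \<in> cube q (n+s)" and i: "i < n" and si: "c i < s"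
    and eq: "St q n s h c u (s + pos u i) x0 = St q n s h c u (s + pos u i) y0"
  shows "h (take n x0) ! i = h (take n y0) ! i"
proof -
  define X where "X = take n x0"
  define Y where "Y = take n y0"
  have X: "X \<in> cube q n" and Y: "Y \<in> cube q n" using take_cube x0 y0 X_def Y_def by auto
  have hX: "h X \<in> cube q n" and hY: "h Y \<in> cube q n" using hF X Y unfolding inF_def by auto
  have un: "distinct u" "set u = {0..<n}" using u unfolding isPerm_def by auto
  have lu: "length u = n" using un distinct_card by fastforce
  have posu: "v < n \<Longrightarrow> pos u v < n \<and> u ! pos u v = v" for v using pos_in[of v u] un lu by auto
  have posinj: "v < n \<Longrightarrow> v' < n \<Longrightarrow> pos u v = pos u v' \<Longrightarrow> v = v'" for v v' using posu by metis
  have nth: "St q n s h c u (s + pos u i) x0 ! v = St q n s h c u (s + pos u i) y0 ! v" for v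
    using eq by simp
  have A: "h X ! v = h Y ! v" if "v < n" "pos u v < pos u i" for v
    using nth[of v] that unfolding St_def X_def Y_def by auto
  have B: "X ! v = Y ! v" if "v < n" "pos u i \<le> pos u v" for v
    using nth[of v] that unfolding St_def X_def Y_def by auto
  have C: "Rg q h c n a X = Rg q h c n a Y" if "a < s" for a
    using nth[of "n + a"] that unfolding St_def X_def Y_def by auto
  have "(\<forall>k<n. IG_edge q n h i k \<longrightarrow> pos u i \<le> pos u k)
         \<or> (\<forall>j<n. \<forall>k<n. c j = c i \<and> pos u i < pos u j \<and> IG_edge q n h j k
                 \<longrightarrow> pos u i \<le> pos u k)" using H i by blast
  then show ?thesis
  proof
    assume H1: "\<forall>k<n. IG_edge q n h i k \<longrightarrow> pos u i \<le> pos u k"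
    have "h X ! i = h Y ! i"
      by (rule locality[OF X Y i]) (use H1 B in \<open>auto simp: IG_edge_def\<close>)
    then show ?thesis using X_def Y_def by simp
  next
    assume H2: "\<forall>j<n. \<forall>k<n. c j = c i \<and> pos u i < pos u j \<and> IG_edge q n h j k
                 \<longrightarrow> pos u i \<le> pos u k"
    define J where "J = {j. j < n \<and> c j = c i}"
    have fJ: "finite J" unfolding J_def by auto
    have iJ: "i \<in> J" unfolding J_def using i by auto
    have oth: "h X ! j = h Y ! j" if "j \<in> J - {i}" for j
    proof -
      have j: "j < n" "c j = c i" "j \<noteq> i" using that unfolding J_def by auto
      have "pos u j \<noteq> pos u i" using posinj j i by metis
      then consider "pos u j < pos u i" | "pos u i < pos u j" by linarith
      then show ?thesis
      proof cases
        case 1 then show ?thesis using A j by auto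
      next
        case 2
        show ?thesis
          by (rule locality[OF X Y j(1)]) (use H2 B j 2 in \<open>auto simp: IG_edge_def\<close>)
      qed
    qed
    have sX: "(\<Sum>j\<in>J. h X ! j) = h X ! i + (\<Sum>j\<in>J - {i}. h X ! j)"
      using fJ iJ by (simp add: sum.remove)
    have sY: "(\<Sum>j\<in>J. h Y ! j) = h Y ! i + (\<Sum>j\<in>J - {i}. h Y ! j)"
      using fJ iJ by (simp add: sum.remove)
    have same: "(\<Sum>j\<in>J - {i}. h X ! j) = (\<Sum>j\<in>J - {i}. h Y ! j)"
      using oth by (rule sum.cong[OF refl])
    have "Rg q h c n (c i) X = Rg q h c n (c i) Y" using C si by auto
    then have "(h X ! i + (\<Sum>j\<in>J - {i}. h X ! j)) mod q = (h Y ! i + (\<Sum>j\<in>J - {i}. h X ! j)) mod q"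
      unfolding Rg_def J_def[symmetric] using sX sY same by simp
    moreover have "h X ! i < q" "h Y ! i < q" using hX hY i unfolding cube_def by auto
    ultimately have "h X ! i = h Y ! i" by (rule mod_cancel_nat)
    then show ?thesis using X_def Y_def by simp
  qed
qed


lemma step:
  assumes hF: "inF n q h" and u: "isPerm n u" and q: "q \<ge> 2"
    and H: "\<forall>i<n.
           (\<forall>k<n. IG_edge q n h i k \<longrightarrow> pos u i \<le> pos u k)
         \<or> (\<forall>j<n. \<forall>k<n. c j = c i \<and> pos u i < pos u j \<and> IG_edge q n h j k
                 \<longrightarrow> pos u i \<le> pos u k)"
    and cs: "\<forall>i<n. c i < s"
    and x0: "x0 \<in> cube q (n+s)" and t: "t < n + s"
  shows "upd (Ff q n s h c u) (([n..<n+s] @ u) ! t) (St q n s h c u t x0) = St q n s h c u (Suc t) x0"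
proof -
  define X where "X = take n x0"
  have X: "X \<in> cube q n" using take_cube x0 X_def by auto
  have hX: "h X \<in> cube q n" using hF X unfolding inF_def by auto
  have lx: "length x0 = n + s" using x0 unfolding cube_def by auto
  have un: "distinct u" "set u = {0..<n}" using u unfolding isPerm_def by auto
  have lu: "length u = n" using un distinct_card by fastforce
  have posu: "v < n \<Longrightarrow> pos u v < n \<and> u ! pos u v = v" for v using pos_in[of v u] un lu by auto
  have posinj: "v < n \<Longrightarrow> v' < n \<Longrightarrow> pos u v = pos u v' \<Longrightarrow> v = v'" for v v' using posu by metis
  have Rq: "Rg q h c n a Y < q" for a Y unfolding Rg_def using q by auto
  have lS: "length (St q n s h c u t' x0) = n + s" for t' unfolding St_def by simp
  show ?thesis
  proof (cases "t < s")
    case True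
    have wt: "([n..<n+s] @ u) ! t = n + t" using True by (simp add: nth_append)
    have tk: "take n (St q n s h c u t x0) = X"
      unfolding X_def by (rule nth_equalityI) (use lx True in \<open>auto simp: St_def\<close>)
    have val: "Ff q n s h c u (St q n s h c u t x0) ! (n + t) = Rg q h c n t X"
      unfolding Ff_def using tk True Rq by simp
    show ?thesis unfolding upd_def wt val
      by (rule nth_equalityI) (use lS True in \<open>auto simp: St_def X_def nth_list_update\<close>)
  next
    case False
    define p where "p = t - s"
    have p: "p < n" using t False p_def by auto
    define i where "i = u ! p"
    have i: "i < n" using p un lu i_def nth_mem by fastforce
    have pi: "pos u i = p" using pos_nth[OF un(1)] p lu i_def by auto
    have wt: "([n..<n+s] @ u) ! t = i" using False p_def i_def by (simp add: nth_append)
    have tp: "s + pos u i = t" using pi p_def False by simp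
    define y where "y = (SOME y. y \<in> cube q (n+s) \<and> St q n s h c u (s + pos u i) y = St q n s h c u t x0)"
    have y: "y \<in> cube q (n+s) \<and> St q n s h c u (s + pos u i) y = St q n s h c u t x0"
      unfolding y_def by (rule someI[of _ x0]) (use x0 tp in auto)
    have "h (take n y) ! i = h (take n x0) ! i"
      using determ[OF hF u H _ x0 i] y cs i tp by auto
    then have val: "Ff q n s h c u (St q n s h c u t x0) ! i = h X ! i"
      unfolding Ff_def using i hX X_def y_def unfolding cube_def by auto
    have ch: "v < n \<Longrightarrow> (s + pos u v < Suc t) = (s + pos u v < t \<or> v = i)" for v
      using tp posinj[of v i] i by (auto simp: less_Suc_eq)
    show ?thesis unfolding upd_def wt val
      by (rule nth_equalityI) (use lS False i ch in \<open>auto simp: St_def X_def nth_list_update\<close>)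
  qed
qed

theorem mainTheorem14:
  fixes q n s :: nat and h :: "nat list \<Rightarrow> nat list" and c :: "nat \<Rightarrow> nat" and u :: "nat list"
  assumes "q \<ge> 2" and "n \<ge> 1" and "inF n q h"
    and "s \<ge> 1" and "\<forall>i<n. c i < s" and "isPerm n u"
    and "\<forall>i<n.
           (\<forall>k<n. IG_edge q n h i k \<longrightarrow> pos u i \<le> pos u k)
         \<or> (\<forall>j<n. \<forall>k<n. c j = c i \<and> pos u i < pos u j \<and> IG_edge q n h j k
                 \<longrightarrow> pos u i \<le> pos u k)"
  shows "kappa q n h u \<le> s"
proof -
  define f where "f = Ff q n s h c u"
  define w where "w = [n..<n+s] @ u"
  have un: "distinct u" "set u = {0..<n}" using assms(6) unfolding isPerm_def by auto
  have lu: "length u = n" using un distinct_card by fastforce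
  have posu: "v < n \<Longrightarrow> pos u v < n \<and> u ! pos u v = v" for v using pos_in[of v u] un lu by auto
  have lw: "length w = n + s" using lu w_def by simp
  have inf: "inF (n + s) q f"
    unfolding inF_def f_def Ff_def cube_def using assms(1) by auto
  have dw: "distinct w" using un unfolding w_def by auto
  have perm: "isPerm (n + s) w" using un dw unfolding isPerm_def w_def by auto
  have pw: "pos w v = s + pos u v" if "v < n" for v
  proof -
    have "w ! (s + pos u v) = v" using posu[OF that] unfolding w_def by (simp add: nth_append)
    moreover have "s + pos u v < length w" using posu[OF that] lw by simp
    ultimately show ?thesis using pos_nth[OF dw] by metis
  qed
  have resp: "respects_order n u w" unfolding respects_order_def using pw by auto
  have seq: "sequentializes q n (n + s) f w h"
    unfolding sequentializes_def
  proof
    fix x0 assume x0: "x0 \<in> cube q (n + s)"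
    have lx: "length x0 = n + s" using x0 unfolding cube_def by auto
    have X: "take n x0 \<in> cube q n" using take_cube x0 by auto
    have hX: "length (h (take n x0)) = n" using assms(3) X unfolding inF_def cube_def by auto
    have S0: "St q n s h c u 0 x0 = x0"
      by (rule nth_equalityI) (use lx in \<open>auto simp: St_def\<close>)
    have "fold (\<lambda>i y. upd f i y) (take (length w) w) x0 = St q n s h c u (length w) x0"
      by (rule fold_steps[where S = "\<lambda>t. St q n s h c u t x0", OF S0])
        (use step[OF assms(3) assms(6) assms(1) assms(7) assms(5) x0] lw in \<open>auto simp: f_def w_def\<close>)
    then have "fseq f w x0 = St q n s h c u (n + s) x0" unfolding fseq_def using lw by simp
    moreover have "take n (St q n s h c u (n + s) x0) = h (take n x0)"
      by (rule nth_equalityI) (use hX posu in \<open>auto simp: St_def\<close>)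
    ultimately show "take n (fseq f w x0) = h (take n x0)" by simp
  qed
  show ?thesis unfolding kappa_def
    by (rule Least_le) (use inf perm resp seq in blast)
qed

end
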